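(* Let $\varepsilon\neq0$. For every solution $\mathbf x:\mathbb R\to\mathbb R^3$ of the $\varepsilon$-revised system $$\dot{\mathbf x}=\mathbf x\times\mathbf m(\mathbf x)+\varepsilon[(\mathbf x\times\mathbf m(\mathbf x))\times\mathbf m(\mathbf x)],$$ the distance to the equilibrium set tends to zero in both time directions: $$d(\mathbf x(t),\mathbf E)\to0\ \text{ as } t\to+\infty\qquad\text{and}\qquad d(\mathbf x(t),\mathbf E)\to0\ \text{ as } t\to-\infty .$$
   Context: Fix constants $0<a_1<a_2<a_3$ and $a,b,c\in\mathbb R$. Set $\mathbf m(\mathbf x)=(a_1x^1+a,\ a_2x^2+b,\ a_3x^3+c)$; $\times$ is the cross product. $\mathbf E=\{\mathbf x\in\mathbb R^3:\mathbf x\times\mathbf m(\mathbf x)=\mathbf 0\}$ is the equilibrium set, and $d(\cdot,\mathbf E)$ is the Euclidean distance to $\mathbf E$. *)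

theory Defs
  imports "HOL-Analysis.Analysis"
begin

definition mfield :: "real \<Rightarrow> real \<Rightarrow> real \<Rightarrow> real \<Rightarrow> real \<Rightarrow> real \<Rightarrow> real^3 \<Rightarrow> real^3" where
  "mfield a1 a2 a3 a b c x = vector [a1 * x$1 + a, a2 * x$2 + b, a3 * x$3 + c]"

definition equil_set :: "real \<Rightarrow> real \<Rightarrow> real \<Rightarrow> real \<Rightarrow> real \<Rightarrow> real \<Rightarrow> (real^3) set" where
  "equil_set a1 a2 a3 a b c = {x. cross3 x (mfield a1 a2 a3 a b c x) = 0}"

end

theory Submission
  imports Defs
begin

lemma core_pos:
  fixes y :: "real \<Rightarrow> real^3" and g :: "real^3 \<Rightarrow> real" and N :: "real \<Rightarrow> real"
  assumes K: "compact K" and yK: "\<And>t. y t \<in> K"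
    and lip: "\<And>s t. norm (y s - y t) \<le> M * \<bar>s - t\<bar>"
    and gc: "continuous_on K g" and gnn: "\<And>u. u \<in> K \<Longrightarrow> g u \<ge> 0"
    and gZ: "\<And>u. u \<in> K \<Longrightarrow> g u = 0 \<Longrightarrow> u \<in> Z"
    and Nd: "\<And>t. (N has_real_derivative \<sigma> * g (y t)) (at t)"
    and Nb: "\<And>t. N t \<le> B" and sig: "\<sigma> > 0"
  shows "((\<lambda>t. infdist (y t) Z) \<longlongrightarrow> 0) at_top"
proof (rule ccontr)
  assume nt: "\<not> ?thesis"
  have "\<exists>\<delta>>0. \<forall>T. \<exists>t\<ge>T. infdist (y t) Z \<ge> \<delta>"
  proof (rule ccontr)
    assume "\<not> ?thesis"
    hence "\<forall>\<delta>>0. \<exists>T. \<forall>t\<ge>T. infdist (y t) Z < \<delta>" by (meson not_le)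
    hence "((\<lambda>t. infdist (y t) Z) \<longlongrightarrow> 0) at_top"
      unfolding tendsto_iff eventually_at_top_linorder dist_real_def
      by (simp add: infdist_nonneg)
    with nt show False by simp
  qed
  then obtain \<delta> where d0: "\<delta> > 0" and dT: "\<And>T. \<exists>t\<ge>T. infdist (y t) Z \<ge> \<delta>" by blast
  define S where "S = K \<inter> {u. \<delta>/2 \<le> infdist u Z}"
  have Sc: "compact S" unfolding S_def
    by (intro compact_Int_closed K closed_Collect_le continuous_intros)
  obtain t0 where "infdist (y t0) Z \<ge> \<delta>" using dT by blast
  hence "y t0 \<in> S" using yK d0 unfolding S_def by auto
  hence Sne: "S \<noteq> {}" by auto
  obtain u0 where u0: "u0 \<in> S" and umin: "\<And>u. u \<in> S \<Longrightarrow> g u0 \<le> g u"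
    using continuous_attains_inf[OF Sc Sne continuous_on_subset[OF gc]] unfolding S_def by blast
  define c where "c = g u0"
  have "u0 \<notin> Z" using u0 d0 infdist_zero[of u0 Z] unfolding S_def by auto
  hence c0: "c > 0" using u0 gnn gZ unfolding c_def S_def by force
  define \<eta> where "\<eta> = \<delta> / (2 * (\<bar>M\<bar> + 1))"
  have e0: "\<eta> > 0" using d0 unfolding \<eta>_def by (simp add: add_pos_nonneg)
  have Me: "\<bar>M\<bar> * \<eta> \<le> \<delta>/2" using d0 unfolding \<eta>_def by (simp add: field_simps)
  have mono: "N s \<le> N t" if "s \<le> t" for s t
    by (rule DERIV_nonneg_imp_nondecreasing[OF that])
       (use Nd sig gnn yK in \<open>fastforce intro: mult_nonneg_nonneg less_imp_le\<close>)
  have incr: "N t + \<eta> * (\<sigma> * c) \<le> N (t + \<eta>)" if ht: "infdist (y t) Z \<ge> \<delta>" for t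
  proof -
    obtain z where z: "t < z" "z < t + \<eta>" and eq: "N (t+\<eta>) - N t = (t + \<eta> - t) * (\<sigma> * g (y z))"
      using MVT2[of t "t+\<eta>" N "\<lambda>s. \<sigma> * g (y s)"] e0 Nd by auto
    have "infdist (y t) Z \<le> infdist (y z) Z + dist (y t) (y z)" by (rule infdist_triangle)
    moreover have "dist (y t) (y z) \<le> \<bar>M\<bar> * \<eta>"
    proof -
      have "dist (y t) (y z) \<le> M * \<bar>t - z\<bar>" using lip by (simp add: dist_norm)
      also have "\<dots> \<le> \<bar>M\<bar> * \<bar>t - z\<bar>" by (simp add: mult_right_mono)
      also have "\<dots> \<le> \<bar>M\<bar> * \<eta>" using z by (intro mult_left_mono) auto
      finally show ?thesis .
    qed
    ultimately have "infdist (y z) Z \<ge> \<delta>/2" using ht Me by linarith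
    hence "y z \<in> S" using yK unfolding S_def by auto
    hence "c \<le> g (y z)" using umin c_def by auto
    hence "\<eta> * (\<sigma> * c) \<le> \<eta> * (\<sigma> * g (y z))" using e0 sig by (simp add: mult_left_mono)
    thus ?thesis using eq by simp
  qed
  define L where "L = Sup (range N)"
  have bdd: "bdd_above (range N)" using Nb by (intro bdd_aboveI[of _ B]) auto
  have NL: "N t \<le> L" for t unfolding L_def using bdd by (auto intro: cSup_upper)
  have "\<exists>T. N T > L - \<eta> * (\<sigma> * c)"
  proof (rule ccontr)
    assume "\<not> ?thesis"
    hence "\<forall>T. N T \<le> L - \<eta> * (\<sigma> * c)" by (auto simp: not_less)
    hence "L \<le> L - \<eta> * (\<sigma> * c)" unfolding L_def by (intro cSup_least) auto
    thus False using mult_pos_pos[OF e0 mult_pos_pos[OF sig c0]] by linarith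
  qed
  then obtain T where T: "N T > L - \<eta> * (\<sigma> * c)" by blast
  obtain t where t: "t \<ge> T" "infdist (y t) Z \<ge> \<delta>" using dT by blast
  have "N (t + \<eta>) \<ge> N T + \<eta> * (\<sigma> * c)" using incr[OF t(2)] mono[OF t(1)] by linarith
  with T NL[of "t+\<eta>"] show False by linarith
qed


lemma core_any:
  fixes y :: "real \<Rightarrow> real^3" and g :: "real^3 \<Rightarrow> real" and N :: "real \<Rightarrow> real"
  assumes K: "compact K" and yK: "\<And>t. y t \<in> K"
    and lip: "\<And>s t. norm (y s - y t) \<le> M * \<bar>s - t\<bar>"
    and gc: "continuous_on K g" and gnn: "\<And>u. u \<in> K \<Longrightarrow> g u \<ge> 0"
    and gZ: "\<And>u. u \<in> K \<Longrightarrow> g u = 0 \<Longrightarrow> u \<in> Z"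
    and Nd: "\<And>t. (N has_real_derivative \<sigma> * g (y t)) (at t)"
    and Nb: "\<And>t. \<bar>N t\<bar> \<le> B" and sig: "\<sigma> \<noteq> 0"
  shows "((\<lambda>t. infdist (y t) Z) \<longlongrightarrow> 0) at_top"
proof (cases "\<sigma> > 0")
  case True
  show ?thesis
    by (rule core_pos[OF K yK lip gc gnn gZ Nd, of B]) (use Nb True in \<open>auto simp: abs_le_iff\<close>)
next
  case False
  hence s: "-\<sigma> > 0" using sig by simp
  have Nd': "((\<lambda>t. - N t) has_real_derivative (-\<sigma>) * g (y t)) (at t)" for t
    using DERIV_minus[OF Nd[of t]] by simp
  show ?thesis
    by (rule core_pos[OF K yK lip gc gnn gZ Nd', of B]) (use Nb s in \<open>auto simp: abs_le_iff\<close>)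
qed

lemma one_var:
  fixes k p al C :: real
  assumes "k > 0" "al \<ge> 0" "k * p^2 - 2 * al * \<bar>p\<bar> \<le> C"
  shows "\<bar>p\<bar> \<le> (\<bar>C\<bar> + 2 * al) / k + 1"
proof (cases "\<bar>p\<bar> \<le> 1")
  case True
  have "0 \<le> (\<bar>C\<bar> + 2 * al) / k" using assms by simp
  then show ?thesis using True by linarith
next
  case False
  have "k * \<bar>p\<bar> * \<bar>p\<bar> \<le> C + 2 * al * \<bar>p\<bar>" using assms(3) by (simp add: power2_eq_square)
  also have "\<dots> \<le> \<bar>C\<bar> * \<bar>p\<bar> + 2 * al * \<bar>p\<bar>" using False
  proof -
    have "\<bar>C\<bar> * 1 \<le> \<bar>C\<bar> * \<bar>p\<bar>" using False by (intro mult_left_mono) auto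
    thus ?thesis by linarith
  qed
  finally have "(k * \<bar>p\<bar>) * \<bar>p\<bar> \<le> (\<bar>C\<bar> + 2 * al) * \<bar>p\<bar>"
    by (simp add: algebra_simps)
  hence "k * \<bar>p\<bar> \<le> \<bar>C\<bar> + 2 * al" using False
    by (simp add: mult_le_cancel_right)
  hence "\<bar>p\<bar> \<le> (\<bar>C\<bar> + 2 * al) / k" using assms by (simp add: field_simps)
  then show ?thesis by simp
qed

lemma sq_lower:
  fixes k q be :: real
  assumes "k > 0" "k2 \<ge> k"
  shows "k2 * q^2 + 2 * be * q \<ge> - (be^2 / k)"
proof -
  have k2: "k2 > 0" using assms by simp
  have "0 \<le> (k2 * q + be)^2" by simp
  hence "- (be^2) \<le> k2 * (k2 * q^2 + 2 * be * q)" by (simp add: power2_eq_square algebra_simps)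
  hence "- (be^2 / k2) \<le> k2 * q^2 + 2 * be * q" using k2 by (simp add: field_simps)
  moreover have "be^2 / k2 \<le> be^2 / k" using assms by (intro divide_left_mono) auto
  ultimately show ?thesis by linarith
qed

lemma quad_bound:
  fixes k kA kB kC p q r al be ga C :: real
  assumes "k > 0" "kA \<ge> k" "kB \<ge> k" "kC \<ge> k"
    and "kA * p^2 + 2 * al * p + (kB * q^2 + 2 * be * q) + (kC * r^2 + 2 * ga * r) = C"
  shows "\<bar>p\<bar> \<le> (\<bar>\<bar>C\<bar> + (be^2 + ga^2) / k\<bar> + 2 * \<bar>al\<bar>) / k + 1"
proof (rule one_var)
  show "k > 0" "\<bar>al\<bar> \<ge> 0" using assms by auto
  have "k * p^2 \<le> kA * p^2" using assms by (simp add: mult_right_mono)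
  moreover have "- (2 * \<bar>al\<bar> * \<bar>p\<bar>) \<le> 2 * al * p"
  proof -
    have "- \<bar>al * p\<bar> \<le> al * p" by linarith
    thus ?thesis by (simp add: abs_mult)
  qed
  moreover note sq_lower[OF assms(1,3), where q=q and be=be] sq_lower[OF assms(1,4), where q=r and be=ga]
  ultimately have "k * p^2 - 2 * \<bar>al\<bar> * \<bar>p\<bar> \<le> C + be^2/k + ga^2/k" using assms(5) by linarith
  also have "\<dots> \<le> \<bar>C\<bar> + (be^2 + ga^2) / k" by (simp add: add_divide_distrib)
  finally show "k * p^2 - 2 * \<bar>al\<bar> * \<bar>p\<bar> \<le> \<bar>C\<bar> + (be^2 + ga^2) / k" .
qed


lemma mfield_chi:
  "mfield a1 a2 a3 a b c = (\<lambda>u. \<chi> i. (if i = 1 then a1 else if i = 2 then a2 else a3) * u$i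
      + (if i = 1 then a else if i = 2 then b else c))"
  by (rule ext) (simp add: mfield_def vec_eq_iff forall_3)

lemma mfield_cont: "continuous_on S (mfield a1 a2 a3 a b c)"
  unfolding mfield_chi by (intro continuous_intros)

lemma cross_id: "u \<bullet> (cross3 (cross3 u w) w) = - ((cross3 u w) \<bullet> (cross3 u w))"
  by (simp add: cross3_simps power2_eq_square)

lemma inner3: "(u::real^3) \<bullet> w = u$1 * w$1 + u$2 * w$2 + u$3 * w$3"
  by (simp add: inner_vec_def sum_3)

lemma norm_sq3: "(norm (u::real^3))^2 = (u$1)^2 + (u$2)^2 + (u$3)^2"
  unfolding power2_norm_eq_inner inner3 by (simp add: power2_eq_square)


theorem theorem5p3:
  fixes a1 a2 a3 a b c \<epsilon> :: real and x :: "real \<Rightarrow> real^3"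
  assumes "0 < a1" "a1 < a2" "a2 < a3"
    and "\<epsilon> \<noteq> 0"
    and "\<And>t. (x has_vector_derivative
           (cross3 (x t) (mfield a1 a2 a3 a b c (x t))
            + \<epsilon> *\<^sub>R cross3 (cross3 (x t) (mfield a1 a2 a3 a b c (x t))) (mfield a1 a2 a3 a b c (x t)))) (at t)"
  shows "((\<lambda>t. infdist (x t) (equil_set a1 a2 a3 a b c)) \<longlongrightarrow> 0) at_top \<and>
         ((\<lambda>t. infdist (x t) (equil_set a1 a2 a3 a b c)) \<longlongrightarrow> 0) at_bot"
proof -
  define m where "m = mfield a1 a2 a3 a b c"
  define F where "F = (\<lambda>u. cross3 u (m u) + \<epsilon> *\<^sub>R cross3 (cross3 u (m u)) (m u))"
  define E where "E = equil_set a1 a2 a3 a b c"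
  have xd: "(x has_vector_derivative F (x t)) (at t)" for t
    using assms(5) unfolding F_def m_def .
  have comp: "((\<lambda>t. x t $ i) has_real_derivative F (x t) $ i) (at t)" for t i
    using bounded_linear.has_vector_derivative[OF bounded_linear_vec_nth xd]
    by (simp add: has_real_derivative_iff_has_vector_derivative)
  have m1: "m u $ 1 = a1 * u$1 + a" and m2: "m u $ 2 = a2 * u$2 + b" and m3: "m u $ 3 = a3 * u$3 + c" for u
    by (simp_all add: m_def mfield_def)
  define Hf where "Hf = (\<lambda>u::real^3. (a1*(u$1)^2 + a2*(u$2)^2 + a3*(u$3)^2)/2 + a*u$1 + b*u$2 + c*u$3)"
  have mF: "m u \<bullet> F u = 0" for u
    unfolding F_def by (simp add: inner_add_right dot_cross_self)
  have Hd: "((\<lambda>t. Hf (x t)) has_real_derivative 0) (at t)" for t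
  proof -
    have "((\<lambda>t. Hf (x t)) has_real_derivative m (x t) \<bullet> F (x t)) (at t)"
      unfolding Hf_def inner3 m1 m2 m3
      by (rule derivative_eq_intros comp refl | simp)+ (simp add: algebra_simps)
    thus ?thesis using mF by simp
  qed
  define h where "h = Hf (x 0)"
  have Hc: "Hf (x t) = h" for t unfolding h_def using DERIV_isconst_all Hd by blast
  define Rb where "Rb = (\<lambda>al be ga. (\<bar>\<bar>2*h\<bar> + (be^2 + ga^2) / a1\<bar> + 2 * \<bar>al\<bar>) / a1 + 1)"
  have Rb0: "Rb al be ga \<ge> 0" for al be ga using assms(1) unfolding Rb_def by simp
  define R where "R = Rb a b c + Rb b a c + Rb c a b"
  have bnd: "\<bar>x t $ 1\<bar> \<le> R \<and> \<bar>x t $ 2\<bar> \<le> R \<and> \<bar>x t $ 3\<bar> \<le> R" for t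
  proof -
    have eq2: "a1 * (x t $ 1)^2 + a2*(x t $2)^2 + a3*(x t$3)^2 + 2*a*x t$1 + 2*b*x t$2 + 2*c*x t$3 = 2*h"
      using Hc[of t] unfolding Hf_def by (simp add: field_simps)
    have b1: "\<bar>x t $ 1\<bar> \<le> Rb a b c" unfolding Rb_def
      by (rule quad_bound[where k=a1 and kA=a1 and kB=a2 and kC=a3 and q="x t $ 2" and r="x t $ 3"])
         (use assms(1-3) eq2 in linarith)+
    have b2: "\<bar>x t $ 2\<bar> \<le> Rb b a c" unfolding Rb_def
      by (rule quad_bound[where k=a1 and kA=a2 and kB=a1 and kC=a3 and q="x t $ 1" and r="x t $ 3"])
         (use assms(1-3) eq2 in linarith)+
    have b3: "\<bar>x t $ 3\<bar> \<le> Rb c a b" unfolding Rb_def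
      by (rule quad_bound[where k=a1 and kA=a3 and kB=a1 and kC=a2 and q="x t $ 1" and r="x t $ 2"])
         (use assms(1-3) eq2 in linarith)+
    show ?thesis using b1 b2 b3 Rb0[of a b c] Rb0[of b a c] Rb0[of c a b] unfolding R_def by linarith
  qed
  define K where "K = cball (0::real^3) (3*R)"
  have K: "compact K" unfolding K_def by simp
  have xK: "x t \<in> K" for t
  proof -
    have "norm (x t) \<le> \<bar>x t $ 1\<bar> + \<bar>x t $ 2\<bar> + \<bar>x t $ 3\<bar>"
      using norm_le_l1_cart[of "x t"] by (simp add: sum_3)
    thus ?thesis using bnd[of t] unfolding K_def by simp
  qed
  have Fc: "continuous_on UNIV F"
    unfolding F_def m_def by (intro continuous_intros continuous_on_cross mfield_cont)
  obtain M where M: "\<And>u. u \<in> K \<Longrightarrow> norm (F u) \<le> M"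
    using compact_imp_bounded[OF compact_continuous_image[OF continuous_on_subset[OF Fc] K]]
    unfolding bounded_iff by blast
  have lip: "norm (x s - x t) \<le> M * \<bar>s - t\<bar>" for s t
  proof -
    have "norm (x s - x t) \<le> M * norm (s - t)"
    proof (rule differentiable_bound[where S=UNIV and f'="\<lambda>t h. h *\<^sub>R F (x t)"])
      show "(x has_derivative (\<lambda>h. h *\<^sub>R F (x t))) (at t within UNIV)" for t
        using xd[of t] unfolding has_vector_derivative_def by simp
      show "onorm (\<lambda>h. h *\<^sub>R F (x t)) \<le> M" for t
        using onorm_scaleR_left[OF bounded_linear_ident, of "F (x t)"] onorm_id[where 'a=real] M[OF xK[of t]]
        by simp
    qed auto
    thus ?thesis by simp
  qed
  define g where "g = (\<lambda>u. (norm (cross3 u (m u)))^2)"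
  have gc: "continuous_on K g" unfolding g_def m_def
    by (intro continuous_intros continuous_on_cross mfield_cont)
  have gnn: "g u \<ge> 0" for u unfolding g_def by simp
  have gZ: "g u = 0 \<Longrightarrow> u \<in> E" for u unfolding g_def E_def equil_set_def m_def by simp
  define N where "N = (\<lambda>t. (norm (x t))^2)"
  have uF: "u \<bullet> F u = - \<epsilon> * g u" for u
    unfolding F_def g_def by (simp add: inner_add_right dot_cross_self cross_id power2_norm_eq_inner)
  have Nd: "(N has_real_derivative (-2*\<epsilon>) * g (x t)) (at t)" for t
  proof -
    have "(N has_real_derivative 2 * (x t \<bullet> F (x t))) (at t)"
      unfolding N_def norm_sq3 inner3
      by (rule derivative_eq_intros comp refl | simp)+
    thus ?thesis using uF by (simp add: mult.assoc)
  qed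
  have Nb: "\<bar>N t\<bar> \<le> (3*R)^2" for t
  proof -
    have "norm (x t) \<le> 3*R" using xK[of t] unfolding K_def by simp
    hence "(norm (x t))^2 \<le> (3*R)^2" by (intro power_mono) auto
    thus ?thesis unfolding N_def by simp
  qed
  have sig: "-2*\<epsilon> \<noteq> 0" using assms(4) by simp
  have top: "((\<lambda>t. infdist (x t) E) \<longlongrightarrow> 0) at_top"
    by (rule core_any[OF K xK lip gc gnn gZ Nd Nb sig])
  have Nd': "((\<lambda>t. N (-t)) has_real_derivative (-(-2*\<epsilon>)) * g (x (-t))) (at t)" for t
    using DERIV_mirror[THEN iffD1, OF Nd[of "-t"]] by simp
  have lip': "norm (x (-s) - x (-t)) \<le> M * \<bar>s - t\<bar>" for s t
    using lip[of "-s" "-t"] by (simp add: abs_minus_commute)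
  have Nb': "\<bar>N (-t)\<bar> \<le> (3*R)^2" for t using Nb .
  have sig': "-(-2*\<epsilon>) \<noteq> 0" using assms(4) by simp
  have "((\<lambda>t. infdist (x (-t)) E) \<longlongrightarrow> 0) at_top"
    by (rule core_any[where y="\<lambda>t. x (-t)", OF K xK lip' gc gnn gZ Nd' Nb' sig'])
  hence bot: "((\<lambda>t. infdist (x t) E) \<longlongrightarrow> 0) at_bot"
    by (simp add: filterlim_at_bot_mirror)
  show ?thesis using top bot unfolding E_def by simp
qed

end
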